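(* Let $U=(U_1,\dots,U_n)$ be a radial solution of $$\Delta U_i+\sum_{j=1}^na_{ij}e^{U_j}=0\ \text{ in }\mathbb R^2,\qquad\int_{\mathbb R^2}e^{U_i}<\infty,\quad i\in I,$$ with $\max_{i\in I}U_i(0)=0$. Let $m_i=\frac1{2\pi}\int_{\mathbb R^2}\sum_ja_{ij}e^{U_j}dx$, $m=\min_im_i$, $\alpha_i=-U_i(0)$ and $D_i=\int_0^\infty\log r\sum_ja_{ij}e^{U_j(r)}r\,dr$. Then for some $\delta>0$, as $r\to\infty$, $$U_i(r)=-m_i\log r+D_i-\alpha_i-\sum_{j=1}^n\frac{a_{ij}}{(m_j-2)^2}e^{D_j-\alpha_j}r^{2-m_j}+O(r^{2-m-\delta}),\quad i\in I.$$
   Context: $I=\{1,\dots,n\}$. $A=(a_{ij})$ is a real $n\times n$ matrix which is symmetric, has nonnegative entries, is irreducible and invertible, and whose inverse $(a^{ij})$ satisfies $a^{ii}\le0$, $a^{ij}\ge0$ for $i\ne j$, and $\sum_ja^{ij}\ge0$. *)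

theory Defs
  imports "HOL-Analysis.Analysis" "HOL-Library.Landau_Symbols"
begin

definition partial_deriv :: "2 \<Rightarrow> (real^2 \<Rightarrow> real) \<Rightarrow> real^2 \<Rightarrow> real" where
  "partial_deriv k u x = deriv (\<lambda>t. u (x + t *\<^sub>R axis k 1)) 0"

definition laplacian :: "(real^2 \<Rightarrow> real) \<Rightarrow> real^2 \<Rightarrow> real" where
  "laplacian u x = (\<Sum>k\<in>UNIV. partial_deriv k (partial_deriv k u) x)"

definition C2_plane :: "(real^2 \<Rightarrow> real) \<Rightarrow> bool" where
  "C2_plane u \<longleftrightarrow> (\<exists>(g :: real^2 \<Rightarrow> real^2) (H :: real^2 \<Rightarrow> real^2^2).
      (\<forall>x. (u has_derivative (\<lambda>h. g x \<bullet> h)) (at x)) \<and>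
      (\<forall>x. (g has_derivative (\<lambda>h. H x *v h)) (at x)) \<and>
      continuous_on UNIV H)"

definition irreducible_matrix :: "real^'n^'n \<Rightarrow> bool" where
  "irreducible_matrix A \<longleftrightarrow>
     (\<forall>J. J \<noteq> {} \<and> J \<noteq> UNIV \<longrightarrow> (\<exists>i\<in>J. \<exists>j. j \<notin> J \<and> A $ i $ j \<noteq> 0))"

end

theory Submission
  imports Defs
begin


lemma line_deriv:
  fixes F :: "real^2 \<Rightarrow> real"
  assumes "(F has_derivative (\<lambda>h. G \<bullet> h)) (at (p + t0 *\<^sub>R v))"
  shows "((\<lambda>t. F (p + t *\<^sub>R v)) has_real_derivative (G \<bullet> v)) (at t0)"
proof -
  have l: "((\<lambda>t. p + t *\<^sub>R v) has_derivative (\<lambda>t. t *\<^sub>R v)) (at t0)"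
    by (auto intro!: derivative_eq_intros)
  from has_derivative_compose[OF l assms]
  have "((\<lambda>t. F (p + t *\<^sub>R v)) has_derivative (\<lambda>t. G \<bullet> (t *\<^sub>R v))) (at t0)" by simp
  then show ?thesis unfolding has_field_derivative_def
    by (rule has_derivative_eq_rhs) (auto simp: fun_eq_iff)
qed

lemma line_deriv_vec:
  fixes g :: "real^2 \<Rightarrow> real^2"
  assumes "(g has_derivative (\<lambda>h. H *v h)) (at (p + t0 *\<^sub>R v))"
  shows "((\<lambda>t. g (p + t *\<^sub>R v) $ k) has_real_derivative ((H *v v) $ k)) (at t0)"
proof -
  have l: "((\<lambda>t. p + t *\<^sub>R v) has_derivative (\<lambda>t. t *\<^sub>R v)) (at t0)"
    by (auto intro!: derivative_eq_intros)
  from has_derivative_compose[OF l assms]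
  have "((\<lambda>t. g (p + t *\<^sub>R v)) has_derivative (\<lambda>t. H *v (t *\<^sub>R v))) (at t0)" by simp
  from bounded_linear.has_derivative[OF bounded_linear_vec_nth[of k] this]
  show ?thesis unfolding has_field_derivative_def
    by (rule has_derivative_eq_rhs) (auto simp: fun_eq_iff matrix_vector_mult_scaleR)
qed

lemma pd_eq:
  fixes u :: "real^2 \<Rightarrow> real"
  assumes "\<And>x. (u has_derivative (\<lambda>h. g x \<bullet> h)) (at x)"
  shows "partial_deriv k u x = g x $ k"
proof -
  have "((\<lambda>t. u (x + t *\<^sub>R axis k 1)) has_real_derivative (g x \<bullet> axis k 1)) (at 0)"
    by (rule line_deriv) (simp add: assms)
  then show ?thesis unfolding partial_deriv_def by (simp add: DERIV_imp_deriv inner_axis)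
qed

lemma laplacian_eq:
  fixes u :: "real^2 \<Rightarrow> real"
  assumes "\<And>x. (u has_derivative (\<lambda>h. g x \<bullet> h)) (at x)"
    and "\<And>x. (g has_derivative (\<lambda>h. H x *v h)) (at x)"
  shows "laplacian u x = (H x *v axis 1 1) $ 1 + (H x *v axis 2 1) $ 2"
proof -
  have pd: "partial_deriv k u = (\<lambda>y. g y $ k)" for k
    using pd_eq[OF assms(1)] by auto
  have "partial_deriv k (\<lambda>y. g y $ k) x = (H x *v axis k 1) $ k" for k
  proof -
    have "((\<lambda>t. g (x + t *\<^sub>R axis k 1) $ k) has_real_derivative ((H x *v axis k 1) $ k)) (at 0)"
      by (rule line_deriv_vec) (simp add: assms)
    then show ?thesis unfolding partial_deriv_def by (simp add: DERIV_imp_deriv)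
  qed
  then show ?thesis unfolding laplacian_def by (simp add: pd sum_2)
qed



lemma norm_e12: "norm (r *\<^sub>R axis 1 1 + t *\<^sub>R axis 2 1 :: real^2) = sqrt (r^2 + t^2)"
  by (simp add: norm_vec_def L2_set_def sum_2 axis_def power2_eq_square)

lemma radial_calc:
  fixes V :: "real \<Rightarrow> real"
  assumes "C2_plane (\<lambda>x::real^2. V (norm x))"
  obtains V' where "\<And>t. t > 0 \<Longrightarrow> (V has_real_derivative V' t) (at t)"
    "continuous_on UNIV V'"
    "continuous_on {0..} V"
    "\<And>r. r > 0 \<Longrightarrow> ((\<lambda>r. r * V' r) has_real_derivative
          (r * laplacian (\<lambda>x::real^2. V (norm x)) (r *\<^sub>R axis 1 1))) (at r)"
proof -
  define u where "u = (\<lambda>x::real^2. V (norm x))"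
  obtain g :: "real^2 \<Rightarrow> real^2" and H :: "real^2 \<Rightarrow> real^2^2" where
    gd: "\<And>x. (u has_derivative (\<lambda>h. g x \<bullet> h)) (at x)" and
    Hd: "\<And>x. (g has_derivative (\<lambda>h. H x *v h)) (at x)"
    using assms unfolding C2_plane_def u_def by blast
  define e1 :: "real^2" where "e1 = axis 1 1"
  define e2 :: "real^2" where "e2 = axis 2 1"
  define V' where "V' = (\<lambda>t. g (t *\<^sub>R e1) $ 1)"
  define V'' where "V'' = (\<lambda>t. (H (t *\<^sub>R e1) *v e1) $ 1)"
  have ue1: "u (t *\<^sub>R e1) = V \<bar>t\<bar>" for t
    by (simp add: u_def e1_def)
  have R1: "(V has_real_derivative V' t) (at t)" if "t > 0" for t
  proof -
    have "((\<lambda>s. u (0 + s *\<^sub>R e1)) has_real_derivative (g (t *\<^sub>R e1) \<bullet> e1)) (at t)"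
      by (rule line_deriv) (simp add: gd)
    then have "((\<lambda>s. u (s *\<^sub>R e1)) has_real_derivative V' t) (at t)"
      by (simp add: V'_def e1_def inner_axis)
    then show ?thesis
      by (rule has_field_derivative_transform_within_open[where S="{0<..}"]) (use that in \<open>auto simp: ue1\<close>)
  qed
  have R2: "(V' has_real_derivative V'' t) (at t)" for t
  proof -
    have "((\<lambda>s. g (0 + s *\<^sub>R e1) $ 1) has_real_derivative ((H (t *\<^sub>R e1) *v e1) $ 1)) (at t)"
      by (rule line_deriv_vec) (simp add: Hd)
    then show ?thesis by (simp add: V'_def V''_def)
  qed
  have cV': "continuous_on UNIV V'"
    using R2 by (meson DERIV_continuous_on)
  have cu: "continuous_on UNIV u"
    using gd by (meson continuous_at_imp_continuous_on has_derivative_continuous)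
  have cV: "continuous_on {0..} V"
  proof -
    have "continuous_on {0..} (\<lambda>t. u (t *\<^sub>R e1))"
      by (intro continuous_on_compose2[OF cu]) (auto intro!: continuous_intros)
    then show ?thesis by (rule continuous_on_cong[THEN iffD1, rotated 2]) (auto simp: ue1)
  qed
  have R4: "(H (r *\<^sub>R e1) *v e2) $ 2 = V' r / r" if r: "r > 0" for r
  proof -
    define \<rho> where "\<rho> = (\<lambda>t. sqrt (r^2 + t^2))"
    have \<rho>pos: "\<rho> t > 0" for t using r by (simp add: \<rho>_def add_pos_nonneg)
    have gform: "g (r *\<^sub>R e1 + t *\<^sub>R e2) $ 2 = t * (V' (\<rho> t) / \<rho> t)" for t
    proof -
      have d1: "((\<lambda>s. u ((r *\<^sub>R e1 + t *\<^sub>R e2) + s *\<^sub>R e2)) has_real_derivative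
                 (g (r *\<^sub>R e1 + t *\<^sub>R e2) \<bullet> e2)) (at 0)"
        by (rule line_deriv) (simp add: gd)
      have eq: "u ((r *\<^sub>R e1 + t *\<^sub>R e2) + s *\<^sub>R e2) = V (sqrt (r^2 + (t + s)^2))" for s
      proof -
        have "(r *\<^sub>R e1 + t *\<^sub>R e2) + s *\<^sub>R e2 = r *\<^sub>R e1 + (t + s) *\<^sub>R e2"
          by (simp add: algebra_simps)
        then show ?thesis unfolding u_def by (metis e1_def e2_def norm_e12)
      qed
      have ds: "((\<lambda>s. sqrt (r^2 + (t + s)^2)) has_real_derivative (t / \<rho> t)) (at 0)"
        using \<rho>pos[of t]
        by (auto intro!: derivative_eq_intros simp: \<rho>_def field_simps)
      have d2: "((\<lambda>s. V (sqrt (r^2 + (t + s)^2))) has_real_derivative (V' (\<rho> t) * (t / \<rho> t))) (at 0)"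
      proof -
        have "(V has_real_derivative V' (\<rho> t)) (at ((\<lambda>s. sqrt (r^2 + (t + s)^2)) 0))"
          using R1[OF \<rho>pos[of t]] by (simp add: \<rho>_def)
        from DERIV_chain2[OF this ds] show ?thesis by simp
      qed
      from d1 have "((\<lambda>s. V (sqrt (r^2 + (t + s)^2))) has_real_derivative (g (r *\<^sub>R e1 + t *\<^sub>R e2) \<bullet> e2)) (at 0)"
        by (simp add: eq)
      from DERIV_unique[OF this d2] show ?thesis by (simp add: e2_def inner_axis)
    qed
    have dH: "((\<lambda>t. g (r *\<^sub>R e1 + t *\<^sub>R e2) $ 2) has_real_derivative ((H (r *\<^sub>R e1) *v e2) $ 2)) (at 0)"
      by (rule line_deriv_vec) (simp add: Hd)
    have d\<rho>: "(\<rho> has_real_derivative (t / \<rho> t)) (at t)" for t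
      using \<rho>pos[of t] by (auto intro!: derivative_eq_intros simp: \<rho>_def field_simps)
    have dV'\<rho>: "((\<lambda>t. V' (\<rho> t)) has_real_derivative (V'' (\<rho> 0) * (0 / \<rho> 0))) (at 0)"
      using DERIV_chain2[OF R2 d\<rho>[of 0]] by simp
    have dprod: "((\<lambda>t. t * (V' (\<rho> t) / \<rho> t)) has_real_derivative (V' (\<rho> 0) / \<rho> 0)) (at 0)"
      using \<rho>pos[of 0] dV'\<rho> d\<rho>[of 0]
      by (auto intro!: derivative_eq_intros simp: field_simps)
    have "\<rho> 0 = r" using r by (simp add: \<rho>_def)
    with DERIV_unique[OF dH] dprod gform show ?thesis by (simp add: fun_eq_iff)
  qed
  have R5: "laplacian u (r *\<^sub>R e1) = V'' r + V' r / r" if "r > 0" for r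
    using laplacian_eq[OF gd Hd, of "r *\<^sub>R e1"] R4[OF that]
    by (simp add: V''_def e1_def e2_def)
  have R6: "((\<lambda>r. r * V' r) has_real_derivative (r * laplacian u (r *\<^sub>R e1))) (at r)" if "r > 0" for r
    using R2[of r] that by (auto intro!: derivative_eq_intros simp: R5 field_simps)
  show ?thesis
    by (rule that[OF R1 cV' cV]) (use R6 in \<open>auto simp: u_def e1_def\<close>)
qed



lemma cont_xlnx: "continuous_on {0..} (\<lambda>s::real. ln s * s)"
proof -
  have "continuous (at x within {0..}) (\<lambda>s::real. ln s * s)" if "x \<ge> 0" for x
  proof (cases "x = 0")
    case True
    have "((\<lambda>s::real. ln s * s) \<longlongrightarrow> 0) (at_right 0)" by real_asymp
    then show ?thesis using True
      by (simp add: continuous_within at_within_Ici_at_right)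
  next
    case False
    then have "x > 0" using that by simp
    then have "isCont (\<lambda>s::real. ln s * s) x" by (auto intro!: continuous_intros)
    then show ?thesis by (simp add: continuous_at_imp_continuous_at_within)
  qed
  then show ?thesis by (simp add: continuous_on_eq_continuous_within)
qed

lemma radial_integral:
  fixes V V' f :: "real \<Rightarrow> real"
  assumes dV: "\<And>t. t>0 \<Longrightarrow> (V has_real_derivative V' t) (at t)"
    and cV': "continuous_on UNIV V'" and cV: "continuous_on {0..} V"
    and dW: "\<And>r. r>0 \<Longrightarrow> ((\<lambda>r. r * V' r) has_real_derivative (- (r * f r))) (at r)"
    and cf: "continuous_on {0..} f"
    and r: "r > 0"
  shows "r * V' r = - integral {0..r} (\<lambda>s. s * f s)"
    and "V r = V 0 - ln r * integral {0..r} (\<lambda>s. s * f s) + integral {0..r} (\<lambda>s. ln s * f s * s)"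
proof -
  have cf': "continuous_on {0..r} f" using cf by (rule continuous_on_subset) auto
  have cV'r: "continuous_on {0..r} V'" using cV' by (rule continuous_on_subset) auto
  have cVr: "continuous_on {0..r} V" using cV by (rule continuous_on_subset) auto
  have cx: "continuous_on {0..r} (\<lambda>s::real. ln s * s)" using cont_xlnx by (rule continuous_on_subset) auto
  have cW: "continuous_on {0..r} (\<lambda>s. s * V' s)"
    by (intro continuous_on_mult continuous_on_id cV'r)
  have "((\<lambda>s. - (s * f s)) has_integral (r * V' r - 0 * V' 0)) {0..r}"
  proof (rule fundamental_theorem_of_calculus_interior[OF _ cW])
    show "0 \<le> r" using r by simp
    fix x assume "x \<in> {0<..<r}"
    then have "x > 0" by simp
    from dW[OF this] show "((\<lambda>s. s * V' s) has_vector_derivative - (x * f x)) (at x)"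
      by (simp add: has_real_derivative_iff_has_vector_derivative)
  qed
  from has_integral_neg[OF this] have "((\<lambda>s. s * f s) has_integral - (r * V' r)) {0..r}"
    by simp
  then show M: "r * V' r = - integral {0..r} (\<lambda>s. s * f s)"
    by (simp add: integral_unique)
  define h where "h = (\<lambda>s. ln s * f s * s)"
  have ch: "continuous_on {0..r} h"
  proof -
    have "continuous_on {0..r} (\<lambda>s. (ln s * s) * f s)"
      by (intro continuous_on_mult cx cf')
    then show ?thesis unfolding h_def by (simp add: mult_ac)
  qed
  define G where "G = (\<lambda>x. integral {0..x} h)"
  define \<Psi> where "\<Psi> = (\<lambda>s. V s - (ln s * s) * V' s - G s)"
  have cG: "continuous_on {0..r} G"
    unfolding G_def by (rule indefinite_integral_continuous_1) (rule integrable_continuous_real[OF ch])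
  have c\<Psi>: "continuous_on {0..r} \<Psi>"
    unfolding \<Psi>_def
    by (intro continuous_on_diff continuous_on_mult cVr cx cV'r cG)
  have d\<Psi>: "DERIV \<Psi> z :> 0" if z: "0 < z" "z < r" for z
  proof -
    have "(G has_real_derivative h z) (at z within {0..r})"
      unfolding G_def by (rule integral_has_real_derivative[OF ch]) (use z in auto)
    moreover have "at z within {0..r} = at z"
      by (rule at_within_interior) (use z in auto)
    ultimately have dG: "(G has_real_derivative h z) (at z)" by simp
    have eq: "(\<lambda>s. (ln s * s) * V' s) = (\<lambda>s. ln s * (s * V' s))" by (simp add: fun_eq_iff)
    have "((\<lambda>s. ln s * (s * V' s)) has_real_derivative (1/z * (z * V' z) + ln z * (- (z * f z)))) (at z)"
    proof -
      have dl: "(ln has_real_derivative 1/z) (at z)" using z by (auto intro!: derivative_eq_intros)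
      from DERIV_mult[OF dl dW[of z]] z show ?thesis by (simp add: algebra_simps)
    qed
    then have "((\<lambda>s. (ln s * s) * V' s) has_real_derivative (V' z - ln z * f z * z)) (at z)"
      using z by (simp add: eq field_simps)
    then have "(\<Psi> has_real_derivative (V' z - (V' z - ln z * f z * z) - h z)) (at z)"
      unfolding \<Psi>_def using z by (intro DERIV_diff dV dG)
    then show ?thesis by (simp add: h_def)
  qed
  have "\<Psi> r = \<Psi> 0" by (rule DERIV_isconst_end[OF r c\<Psi> d\<Psi>])
  then have "V r = V 0 + ln r * (r * V' r) + G r"
    by (simp add: \<Psi>_def G_def algebra_simps)
  then show "V r = V 0 - ln r * integral {0..r} (\<lambda>s. s * f s) + integral {0..r} (\<lambda>s. ln s * f s * s)"
    by (simp add: M G_def h_def)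
qed



lemma int_compact:
  fixes f :: "real^2 \<Rightarrow> real"
  assumes "compact S" "continuous_on S f"
  shows "f integrable_on S"
proof -
  have "set_integrable lborel S f"
    unfolding set_integrable_def by (rule borel_integrable_compact[OF assms])
  then show ?thesis by (rule set_borel_integral_eq_integral(1))
qed

lemma const_cball:
  assumes r: "r \<ge> 0"
  shows "((\<lambda>x::real^2. c) has_integral c * (pi * r^2)) (cball 0 r)"
proof -
  have "((\<lambda>x::real^2. 1) has_integral measure lborel (cball (0::real^2) r)) (cball 0 r)"
    by (rule has_integral_measure_lborel) (auto simp: emeasure_cball r)
  moreover have "measure lborel (cball (0::real^2) r) = pi * r^2"
    using content_cball[OF r, where c="0::real^2"] by (simp add: unit_ball_vol_2)
  ultimately have "((\<lambda>x::real^2. 1) has_integral (pi * r^2)) (cball 0 r)" by simp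
  from has_integral_mult_left[OF this, of c] show ?thesis by (simp add: mult_ac)
qed

lemma radial_int_cball:
  fixes F :: "real \<Rightarrow> real"
  assumes cF: "continuous_on {0..} F" and r: "r \<ge> 0"
  shows "(\<lambda>x::real^2. F (norm x)) integrable_on cball 0 r"
proof -
  have "continuous_on (cball (0::real^2) r) (\<lambda>x. F (norm x))"
    by (rule continuous_on_compose2[OF cF]) (auto intro!: continuous_intros)
  then show ?thesis by (intro int_compact) auto
qed

lemma annulus_bound:
  fixes F :: "real \<Rightarrow> real"
  assumes cF: "continuous_on {0..} F" and ab: "0 \<le> a" "a \<le> b"
    and bnd: "\<And>s. a \<le> s \<Longrightarrow> s \<le> b \<Longrightarrow> \<bar>F s - c\<bar> \<le> e"
  defines "\<Psi> \<equiv> (\<lambda>R. integral (cball (0::real^2) R) (\<lambda>x. F (norm x)) - 2 * pi * integral {0..R} (\<lambda>s. s * F s))"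
  shows "\<bar>\<Psi> b - \<Psi> a\<bar> \<le> 2 * e * pi * (b^2 - a^2)"
proof -
  define A where "A = cball (0::real^2) b - cball 0 a"
  have neg: "negligible (cball (0::real^2) a - cball 0 b)"
  proof -
    have "cball (0::real^2) a - cball 0 b = {}" using ab(2) by (simp add: subset_cball)
    then show ?thesis by simp
  qed
  have iF: "((\<lambda>x. F (norm x)) has_integral
      (integral (cball (0::real^2) b) (\<lambda>x. F (norm x)) - integral (cball (0::real^2) a) (\<lambda>x. F (norm x)))) A"
    unfolding A_def
    by (intro has_integral_setdiff neg integrable_integral radial_int_cball[OF cF]) (use ab in auto)
  have ic: "((\<lambda>x::real^2. k) has_integral (k * (pi * b^2) - k * (pi * a^2))) A" for k
    unfolding A_def
    by (intro has_integral_setdiff neg const_cball) (use ab in auto)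
  have e0: "e \<ge> 0" using bnd[of a] ab by auto
  have "((\<lambda>x. F (norm x) - c) has_integral
      ((integral (cball (0::real^2) b) (\<lambda>x. F (norm x)) - integral (cball (0::real^2) a) (\<lambda>x. F (norm x)))
       - (c * (pi * b^2) - c * (pi * a^2)))) A"
    by (intro has_integral_diff iF ic)
  moreover have "norm (integral A (\<lambda>x. F (norm x) - c)) \<le> integral A (\<lambda>x. e)"
  proof (rule integral_norm_bound_integral)
    show "(\<lambda>x. F (norm x) - c) integrable_on A" using calculation by blast
    show "(\<lambda>x. e) integrable_on A" using ic by blast
    fix x assume "x \<in> A"
    then have "a \<le> norm x" "norm x \<le> b" by (auto simp: A_def)
    then show "norm (F (norm x) - c) \<le> e" using bnd by simp
  qed
  ultimately have 2: "\<bar>(integral (cball (0::real^2) b) (\<lambda>x. F (norm x)) - integral (cball (0::real^2) a) (\<lambda>x. F (norm x)))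
       - (c * (pi * b^2) - c * (pi * a^2))\<bar> \<le> e * (pi * b^2) - e * (pi * a^2)"
    using integral_unique[OF ic[of e]] by (simp add: integral_unique)
  have cs: "continuous_on {0..b} (\<lambda>s. s * F s)"
    using cF by (auto intro!: continuous_intros intro: continuous_on_subset)
  have comb: "integral {0..a} (\<lambda>s. s * F s) + integral {a..b} (\<lambda>s. s * F s) = integral {0..b} (\<lambda>s. s * F s)"
    by (rule Henstock_Kurzweil_Integration.integral_combine) (use ab cs in \<open>auto intro: integrable_continuous_real\<close>)
  have ilin: "((\<lambda>s. s * k) has_integral (k * b^2 / 2 - k * a^2 / 2)) {a..b}" for k
  proof -
    have "((\<lambda>s. s * k) has_integral ((\<lambda>s. k * s^2 / 2) b - (\<lambda>s. k * s^2 / 2) a)) {a..b}"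
      by (rule fundamental_theorem_of_calculus[OF ab(2)])
         (auto intro!: derivative_eq_intros simp: has_real_derivative_iff_has_vector_derivative[symmetric])
    then show ?thesis by simp
  qed
  have csab: "continuous_on {a..b} (\<lambda>s. s * F s)" using cs ab by (auto intro: continuous_on_subset)
  have i1: "((\<lambda>s. s * F s - s * c) has_integral (integral {a..b} (\<lambda>s. s * F s) - (c * b^2 / 2 - c * a^2 / 2))) {a..b}"
    by (intro has_integral_diff ilin integrable_integral integrable_continuous_real csab)
  have "norm (integral {a..b} (\<lambda>s. s * F s - s * c)) \<le> integral {a..b} (\<lambda>s. s * e)"
  proof (rule integral_norm_bound_integral)
    show "(\<lambda>s. s * F s - s * c) integrable_on {a..b}" using i1 by blast
    show "(\<lambda>s. s * e) integrable_on {a..b}" using ilin by blast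
    fix s assume s: "s \<in> {a..b}"
    then have "s \<ge> 0" using ab by auto
    have "norm (s * F s - s * c) = s * \<bar>F s - c\<bar>" using \<open>s \<ge> 0\<close> by (simp add: abs_mult right_diff_distrib[symmetric])
    also have "\<dots> \<le> s * e" using bnd s \<open>s \<ge> 0\<close> by (auto intro: mult_left_mono)
    finally show "norm (s * F s - s * c) \<le> s * e" .
  qed
  then have 1: "\<bar>integral {a..b} (\<lambda>s. s * F s) - (c * b^2 / 2 - c * a^2 / 2)\<bar> \<le> e * b^2 / 2 - e * a^2 / 2"
    using integral_unique[OF i1] integral_unique[OF ilin[of e]] by simp
  have "\<Psi> b - \<Psi> a = ((integral (cball (0::real^2) b) (\<lambda>x. F (norm x)) - integral (cball (0::real^2) a) (\<lambda>x. F (norm x)))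
       - (c * (pi * b^2) - c * (pi * a^2))) - 2 * pi * (integral {a..b} (\<lambda>s. s * F s) - (c * b^2 / 2 - c * a^2 / 2))"
    unfolding \<Psi>_def using comb[symmetric] by (simp add: algebra_simps)
  also have "\<bar>\<dots>\<bar> \<le> (e * (pi * b^2) - e * (pi * a^2)) + 2 * pi * (e * b^2 / 2 - e * a^2 / 2)"
  proof -
    let ?X = "(integral (cball (0::real^2) b) (\<lambda>x. F (norm x)) - integral (cball (0::real^2) a) (\<lambda>x. F (norm x)))
       - (c * (pi * b^2) - c * (pi * a^2))"
    let ?Y = "integral {a..b} (\<lambda>s. s * F s) - (c * b^2 / 2 - c * a^2 / 2)"
    have h: "\<bar>2 * pi * ?Y\<bar> = 2 * pi * \<bar>?Y\<bar>" by (simp add: abs_mult)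
    have "2 * pi * \<bar>?Y\<bar> \<le> 2 * pi * (e * b^2 / 2 - e * a^2 / 2)"
      by (rule mult_left_mono[OF 1]) simp
    moreover have "\<bar>?X - 2 * pi * ?Y\<bar> \<le> \<bar>?X\<bar> + \<bar>2 * pi * ?Y\<bar>" by (rule abs_triangle_ineq4)
    ultimately show ?thesis using 2 h by linarith
  qed
  also have "\<dots> = 2 * e * pi * (b^2 - a^2)" by (simp add: algebra_simps)
  finally show ?thesis .
qed



lemma annulus_bound_sym:
  fixes F :: "real \<Rightarrow> real"
  assumes cF: "continuous_on {0..} F" and xy: "0 \<le> x" "0 \<le> y"
    and bnd: "\<And>s. min x y \<le> s \<Longrightarrow> s \<le> max x y \<Longrightarrow> \<bar>F s - c\<bar> \<le> e"
  defines "\<Psi> \<equiv> (\<lambda>R. integral (cball (0::real^2) R) (\<lambda>x. F (norm x)) - 2 * pi * integral {0..R} (\<lambda>s. s * F s))"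
  shows "\<bar>\<Psi> y - \<Psi> x\<bar> \<le> 2 * e * pi * \<bar>y^2 - x^2\<bar>"
proof (cases "x \<le> y")
  case True
  have "\<bar>\<Psi> y - \<Psi> x\<bar> \<le> 2 * e * pi * (y^2 - x^2)"
    unfolding \<Psi>_def by (rule annulus_bound[OF cF xy(1) True]) (use bnd True in auto)
  moreover have "y^2 - x^2 \<ge> 0" using True xy by (simp add: power_mono)
  ultimately show ?thesis by simp
next
  case False
  have "\<bar>\<Psi> x - \<Psi> y\<bar> \<le> 2 * e * pi * (x^2 - y^2)"
    unfolding \<Psi>_def by (rule annulus_bound[OF cF xy(2)]) (use bnd False in auto)
  moreover have "x^2 - y^2 \<ge> 0" using False xy by (simp add: power_mono)
  ultimately show ?thesis by (simp add: abs_minus_commute)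
qed

lemma polar_cball:
  fixes F :: "real \<Rightarrow> real"
  assumes cF: "continuous_on {0..} F" and R: "R \<ge> 0"
  shows "integral (cball (0::real^2) R) (\<lambda>x. F (norm x)) = 2 * pi * integral {0..R} (\<lambda>s. s * F s)"
proof (cases "R = 0")
  case True
  then show ?thesis by simp
next
  case False
  then have R: "R > 0" using R by simp
  define \<Psi> where "\<Psi> = (\<lambda>R. integral (cball (0::real^2) R) (\<lambda>x. F (norm x)) - 2 * pi * integral {0..R} (\<lambda>s. s * F s))"
  have "bounded (F ` {0..R})"
    by (rule compact_imp_bounded, rule compact_continuous_image) (use cF in \<open>auto intro: continuous_on_subset\<close>)
  then obtain B where B: "\<And>s. s \<in> {0..R} \<Longrightarrow> \<bar>F s\<bar> \<le> B" unfolding bounded_iff by (metis image_eqI real_norm_def)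
  have B0: "B \<ge> 0" using B[of 0] R by auto
  have lip: "\<bar>\<Psi> y - \<Psi> x\<bar> \<le> 4 * B * pi * R * \<bar>y - x\<bar>" if "x \<in> {0..R}" "y \<in> {0..R}" for x y
  proof -
    have 1: "\<bar>\<Psi> y - \<Psi> x\<bar> \<le> 2 * B * pi * \<bar>y^2 - x^2\<bar>"
      unfolding \<Psi>_def
    proof (rule annulus_bound_sym[where c=0, OF cF])
      fix s assume "min x y \<le> s" "s \<le> max x y"
      then have "s \<in> {0..R}" using that by (auto simp: min_def max_def split: if_splits)
      then show "\<bar>F s - 0\<bar> \<le> B" using B by simp
    qed (use that in auto)
    have 2: "\<bar>y^2 - x^2\<bar> = \<bar>y - x\<bar> * (y + x)"
    proof -
      have "y^2 - x^2 = (y - x) * (y + x)" by (simp add: power2_eq_square algebra_simps)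
      then show ?thesis using that by (simp add: abs_mult)
    qed
    have 3: "\<bar>y - x\<bar> * (y + x) \<le> \<bar>y - x\<bar> * (2 * R)" using that by (intro mult_left_mono) auto
    have "2 * B * pi * \<bar>y^2 - x^2\<bar> \<le> 2 * B * pi * (\<bar>y - x\<bar> * (2 * R))"
      unfolding 2 using 3 B0 by (intro mult_left_mono[OF 3]) auto
    with 1 show ?thesis by (simp add: algebra_simps)
  qed
  have c\<Psi>: "continuous_on {0..R} \<Psi>"
    unfolding continuous_on_iff
  proof (intro ballI allI impI)
    fix x e :: real assume x: "x \<in> {0..R}" and e: "e > 0"
    define d where "d = e / (4 * B * pi * R + 1)"
    have K0: "4 * B * pi * R \<ge> 0" using B0 R by simp
    then have K: "4 * B * pi * R + 1 > 0" by linarith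
    have d: "d > 0" using e K by (simp add: d_def)
    show "\<exists>d>0. \<forall>x'\<in>{0..R}. dist x' x < d \<longrightarrow> dist (\<Psi> x') (\<Psi> x) < e"
    proof (intro exI conjI ballI impI)
      show "d > 0" by (fact d)
      fix y assume y: "y \<in> {0..R}" and "dist y x < d"
      then have yx: "\<bar>y - x\<bar> < d" by (simp add: dist_real_def)
      have "\<bar>\<Psi> y - \<Psi> x\<bar> \<le> 4 * B * pi * R * \<bar>y - x\<bar>" by (rule lip[OF x y])
      also have "\<dots> \<le> (4 * B * pi * R + 1) * \<bar>y - x\<bar>" by (simp add: algebra_simps)
      also have "\<dots> < (4 * B * pi * R + 1) * d"
        using yx K by (intro mult_strict_left_mono) auto
      also have "\<dots> = e" using K by (simp add: d_def)
      finally show "dist (\<Psi> y) (\<Psi> x) < e" by (simp add: dist_real_def)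
    qed
  qed
  have d\<Psi>: "DERIV \<Psi> z :> 0" if z: "0 < z" "z < R" for z
    unfolding has_field_derivative_iff LIM_eq
  proof (intro allI impI)
    fix e :: real assume e: "e > 0"
    define \<epsilon> where "\<epsilon> = e / (4 * pi * (2 * z + 1))"
    have \<epsilon>: "\<epsilon> > 0" using e z by (simp add: \<epsilon>_def)
    have "continuous (at z within {0..}) F"
      using cF z by (simp add: continuous_on_eq_continuous_within)
    then obtain \<delta> where \<delta>: "\<delta> > 0" and \<delta>F: "\<And>s. s \<in> {0..} \<Longrightarrow> dist s z < \<delta> \<Longrightarrow> dist (F s) (F z) < \<epsilon>"
      unfolding continuous_within_eps_delta using \<epsilon> by blast
    define s0 where "s0 = min \<delta> (min z 1)"
    show "\<exists>s>0. \<forall>y. y \<noteq> z \<and> norm (y - z) < s \<longrightarrow> norm ((\<Psi> y - \<Psi> z) / (y - z) - 0) < e"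
    proof (intro exI conjI allI impI)
      show "s0 > 0" using \<delta> z by (simp add: s0_def)
      fix y assume "y \<noteq> z \<and> norm (y - z) < s0"
      then have yz: "y \<noteq> z" "\<bar>y - z\<bar> < \<delta>" "\<bar>y - z\<bar> < z" "\<bar>y - z\<bar> < 1" by (auto simp: s0_def)
      have y0: "y > 0" using yz by linarith
      have "\<bar>\<Psi> y - \<Psi> z\<bar> \<le> 2 * \<epsilon> * pi * \<bar>y^2 - z^2\<bar>"
        unfolding \<Psi>_def
      proof (rule annulus_bound_sym[OF cF])
        show "0 \<le> z" "0 \<le> y" using z y0 by auto
        fix s assume s: "min z y \<le> s" "s \<le> max z y"
        then have "s \<ge> 0" "\<bar>s - z\<bar> < \<delta>" using yz y0 z by (auto simp: min_def max_def split: if_splits)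
        then have "dist (F s) (F z) < \<epsilon>" using \<delta>F by (simp add: dist_real_def)
        then show "\<bar>F s - F z\<bar> \<le> \<epsilon>" by (simp add: dist_real_def)
      qed
      also have "\<bar>y^2 - z^2\<bar> = \<bar>y - z\<bar> * (y + z)"
      proof -
        have "y^2 - z^2 = (y - z) * (y + z)" by (simp add: power2_eq_square algebra_simps)
        then show ?thesis using y0 z by (simp add: abs_mult)
      qed
      finally have "\<bar>\<Psi> y - \<Psi> z\<bar> \<le> 2 * \<epsilon> * pi * (y + z) * \<bar>y - z\<bar>" by (simp add: algebra_simps)
      then have "\<bar>(\<Psi> y - \<Psi> z) / (y - z)\<bar> \<le> 2 * \<epsilon> * pi * (y + z)"
        using yz by (simp add: abs_divide divide_le_eq)
      also have "\<dots> \<le> 2 * \<epsilon> * pi * (2 * z + 1)"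
        using yz \<epsilon> by (intro mult_left_mono) auto
      also have "\<dots> = e / 2"
      proof -
        have q: "pi * (2 * z + 1) > 0" using z by simp
        have "2 * \<epsilon> * pi * (2 * z + 1) = 2 * e * (pi * (2 * z + 1)) / (4 * (pi * (2 * z + 1)))"
          by (simp add: \<epsilon>_def mult_ac)
        also have "\<dots> = e / 2" using q by (simp add: field_simps)
        finally show ?thesis .
      qed
      finally have "\<bar>(\<Psi> y - \<Psi> z) / (y - z)\<bar> \<le> e / 2" .
      moreover have "e / 2 < e" using e by simp
      ultimately have "\<bar>(\<Psi> y - \<Psi> z) / (y - z)\<bar> < e" by (rule le_less_trans)
      then show "norm ((\<Psi> y - \<Psi> z) / (y - z) - 0) < e" by (simp only: real_norm_def diff_zero)
    qed
  qed
  have "\<Psi> R = \<Psi> 0" by (rule DERIV_isconst_end[OF R c\<Psi> d\<Psi>])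
  then show ?thesis by (simp add: \<Psi>_def)
qed



lemma polar_lim:
  fixes F :: "real \<Rightarrow> real"
  assumes cF: "continuous_on {0..} F" and F0: "\<And>s. s \<ge> 0 \<Longrightarrow> F s \<ge> 0"
    and int: "(\<lambda>x::real^2. F (norm x)) integrable_on UNIV"
  shows "(\<lambda>n. 2 * pi * integral {0..real n} (\<lambda>s. s * F s)) \<longlonglongrightarrow> integral UNIV (\<lambda>x::real^2. F (norm x))"
    and "\<And>R. R \<ge> 0 \<Longrightarrow> 2 * pi * integral {0..R} (\<lambda>s. s * F s) \<le> integral UNIV (\<lambda>x::real^2. F (norm x))"
proof -
  define f where "f = (\<lambda>k::nat. \<lambda>x::real^2. if x \<in> cball 0 (real k) then F (norm x) else 0)"
  have fi: "f k integrable_on UNIV" for k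
    unfolding f_def integrable_restrict_UNIV by (rule radial_int_cball[OF cF]) simp
  have fint: "integral UNIV (f k) = 2 * pi * integral {0..real k} (\<lambda>s. s * F s)" for k
    unfolding f_def integral_restrict_UNIV by (rule polar_cball[OF cF]) simp
  have "(\<lambda>k. integral UNIV (f k)) \<longlonglongrightarrow> integral UNIV (\<lambda>x::real^2. F (norm x))"
  proof (rule dominated_convergence(2)[OF fi int])
    fix k and x :: "real^2"
    show "norm (f k x) \<le> F (norm x)" using F0[of "norm x"] by (simp add: f_def)
  next
    fix x :: "real^2"
    obtain N :: nat where N: "norm x \<le> real N" using real_arch_simple by blast
    have "eventually (\<lambda>k. f k x = F (norm x)) sequentially"
      unfolding eventually_sequentially
    proof (intro exI allI impI)
      fix k assume "N \<le> k"
      then have "norm x \<le> real k" using N by linarith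
      then show "f k x = F (norm x)" by (simp add: f_def)
    qed
    then show "(\<lambda>k. f k x) \<longlonglongrightarrow> F (norm x)" by (rule tendsto_eventually)
  qed
  then show "(\<lambda>n. 2 * pi * integral {0..real n} (\<lambda>s. s * F s)) \<longlonglongrightarrow> integral UNIV (\<lambda>x::real^2. F (norm x))"
    by (simp add: fint)
  fix R :: real assume R: "R \<ge> 0"
  have "integral (cball (0::real^2) R) (\<lambda>x. F (norm x)) \<le> integral UNIV (\<lambda>x::real^2. F (norm x))"
    by (rule integral_subset_le) (use radial_int_cball[OF cF R] int F0 in auto)
  then show "2 * pi * integral {0..R} (\<lambda>s. s * F s) \<le> integral UNIV (\<lambda>x::real^2. F (norm x))"
    using polar_cball[OF cF R] by simp
qed



lemma has_integral_Ioc_Icc: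
  fixes f :: "real \<Rightarrow> real"
  shows "(f has_integral y) {a<..b} \<longleftrightarrow> (f has_integral y) {a..b}"
proof (rule has_integral_spike_set_eq)
  show "negligible {x \<in> {a<..b} - {a..b}. f x \<noteq> 0}" by (rule negligible_subset[of "{}"]) auto
  show "negligible {x \<in> {a..b} - {a<..b}. f x \<noteq> 0}" by (rule negligible_subset[of "{a}"]) auto
qed

lemma integral_Ioc_Icc:
  fixes f :: "real \<Rightarrow> real"
  shows "integral {a<..b} f = integral {a..b} f"
  by (metis has_integral_Ioc_Icc integrable_integral integral_unique not_integrable_integral integrable_on_def)

lemma log_pow_has_integral:
  fixes p r n :: real
  assumes p: "p > 0" and r: "r > 0" and rn: "r \<le> n"
  shows "((\<lambda>s. (ln s - ln r) * s powr (-1-p)) has_integral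
           (r powr (-p) / p^2 - (ln n - ln r) * n powr (-p) / p - n powr (-p) / p^2)) {r..n}"
proof -
  define \<Phi> where "\<Phi> = (\<lambda>s. - (ln s - ln r) * s powr (-p) / p - s powr (-p) / p^2)"
  have d: "(\<Phi> has_real_derivative ((ln s - ln r) * s powr (-1-p))) (at s)" if s: "s > 0" for s
  proof -
    have e1: "s powr (-p - 1) = s powr (-p) / s" using s by (simp add: powr_diff)
    have "-1 - p = -p - 1" by simp
    then have e2: "s powr (-1 - p) = s powr (-p) / s" using e1 by metis
    show ?thesis
      unfolding \<Phi>_def using s p by (auto intro!: derivative_eq_intros simp: e1 e2 field_simps power2_eq_square)
  qed
  have "((\<lambda>s. (ln s - ln r) * s powr (-1-p)) has_integral (\<Phi> n - \<Phi> r)) {r..n}"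
    by (rule fundamental_theorem_of_calculus[OF rn])
       (use r d in \<open>auto simp: has_real_derivative_iff_has_vector_derivative[symmetric] intro: has_field_derivative_at_within\<close>)
  moreover have "\<Phi> n - \<Phi> r = r powr (-p) / p^2 - (ln n - ln r) * n powr (-p) / p - n powr (-p) / p^2"
    using p by (simp add: \<Phi>_def field_simps)
  ultimately show ?thesis by simp
qed

lemma tail_bound:
  fixes \<phi> :: "real \<Rightarrow> real"
  assumes p: "p > 0" and r: "r > 0" and rn: "r \<le> n" and c: "c \<ge> 0"
    and int: "\<phi> integrable_on {r..n}"
    and bnd: "\<And>s. r \<le> s \<Longrightarrow> s \<le> n \<Longrightarrow> 0 \<le> \<phi> s \<and> \<phi> s \<le> c * ((ln s - ln r) * s powr (-1-p))"
  shows "0 \<le> integral {r..n} \<phi>" "integral {r..n} \<phi> \<le> c * (r powr (-p) / p^2)"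
proof -
  show "0 \<le> integral {r..n} \<phi>"
    by (rule integral_nonneg[OF int]) (use bnd in auto)
  have hi: "((\<lambda>s. c * ((ln s - ln r) * s powr (-1-p))) has_integral
      c * (r powr (-p) / p^2 - (ln n - ln r) * n powr (-p) / p - n powr (-p) / p^2)) {r..n}"
    by (rule has_integral_mult_right[OF log_pow_has_integral[OF p r rn]])
  have "integral {r..n} \<phi> \<le> c * (r powr (-p) / p^2 - (ln n - ln r) * n powr (-p) / p - n powr (-p) / p^2)"
    using has_integral_le[OF integrable_integral[OF int] hi] bnd by auto
  also have "\<dots> \<le> c * (r powr (-p) / p^2)"
  proof (rule mult_left_mono[OF _ c])
    have "ln n \<ge> ln r" using r rn by simp
    then have "(ln n - ln r) * n powr (-p) / p \<ge> 0" using p by simp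
    moreover have "n powr (-p) / p^2 \<ge> 0" by simp
    ultimately show "r powr (-p) / p^2 - (ln n - ln r) * n powr (-p) / p - n powr (-p) / p^2 \<le> r powr (-p) / p^2"
      by linarith
  qed
  finally show "integral {r..n} \<phi> \<le> c * (r powr (-p) / p^2)" .
qed

lemma log_pow_lim:
  fixes p r :: real
  assumes p: "p > 0" and r: "r > 0"
  shows "(\<lambda>n::nat. integral {r..real n} (\<lambda>s. (ln s - ln r) * s powr (-1-p))) \<longlonglongrightarrow> r powr (-p) / p^2"
proof -
  have lim: "((\<lambda>x::real. r powr (-p) / p^2 - (ln x - ln r) * x powr (-p) / p - x powr (-p) / p^2)
              \<longlongrightarrow> r powr (-p) / p^2) at_top"
    using p by real_asymp
  have lim2: "(\<lambda>n::nat. r powr (-p) / p^2 - (ln (real n) - ln r) * real n powr (-p) / p - real n powr (-p) / p^2)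
              \<longlonglongrightarrow> r powr (-p) / p^2"
    by (rule filterlim_compose[OF lim filterlim_real_sequentially])
  obtain N :: nat where N: "r \<le> real N" using real_arch_simple by blast
  have ev: "eventually (\<lambda>n. r powr (-p) / p^2 - (ln (real n) - ln r) * real n powr (-p) / p - real n powr (-p) / p^2
       = integral {r..real n} (\<lambda>s. (ln s - ln r) * s powr (-1-p))) sequentially"
    unfolding eventually_sequentially
  proof (intro exI allI impI)
    fix n assume "N \<le> n"
    then have "r \<le> real n" using N by linarith
    from integral_unique[OF log_pow_has_integral[OF p r this]]
    show "r powr (-p) / p^2 - (ln (real n) - ln r) * real n powr (-p) / p - real n powr (-p) / p^2
       = integral {r..real n} (\<lambda>s. (ln s - ln r) * s powr (-1-p))" by simp
  qed
  show ?thesis by (rule Lim_transform_eventually[OF lim2 ev])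
qed



theorem lemma3p1:
  fixes A :: "real^'n^'n" and U :: "'n \<Rightarrow> real \<Rightarrow> real"
  assumes sym: "transpose A = A"
    and nonneg: "\<forall>i j. A $ i $ j \<ge> 0"
    and irred: "irreducible_matrix A"
    and inv: "invertible A"
    and inv_diag: "\<forall>i. matrix_inv A $ i $ i \<le> 0"
    and inv_off: "\<forall>i j. i \<noteq> j \<longrightarrow> matrix_inv A $ i $ j \<ge> 0"
    and inv_rows: "\<forall>i. (\<Sum>j\<in>UNIV. matrix_inv A $ i $ j) \<ge> 0"
    and reg: "\<forall>i. C2_plane (\<lambda>x. U i (norm x))"
    and eqn: "\<forall>i x. laplacian (\<lambda>y. U i (norm y)) x
                   + (\<Sum>j\<in>UNIV. A $ i $ j * exp (U j (norm x))) = 0"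
    and finite_mass: "\<forall>i. (\<lambda>x::real^2. exp (U i (norm x))) integrable_on UNIV"
    and normalized: "(MAX i. U i 0) = 0"
  defines "ms \<equiv> (\<lambda>i. (1 / (2 * pi)) *
              integral (UNIV :: (real^2) set) (\<lambda>x. \<Sum>j\<in>UNIV. A $ i $ j * exp (U j (norm x))))"
    and "\<alpha> \<equiv> (\<lambda>i. - U i 0)"
    and "D \<equiv> (\<lambda>i. integral {0<..} (\<lambda>r. ln r * (\<Sum>j\<in>UNIV. A $ i $ j * exp (U j r)) * r))"
  shows "\<exists>\<delta>>0. \<forall>i.
     (\<lambda>r. U i r - (- ms i * ln r + D i - \<alpha> i
        - (\<Sum>j\<in>UNIV. A $ i $ j / (ms j - 2)^2 * exp (D j - \<alpha> j) * r powr (2 - ms j))))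
     \<in> O[at_top](\<lambda>r. r powr (2 - (MIN k. ms k) - \<delta>))"
proof -
  define f where "f = (\<lambda>i s. \<Sum>j\<in>UNIV. A $ i $ j * exp (U j s))"
  define M where "M = (\<lambda>i r. integral {0..r} (\<lambda>s. s * f i s))"
  define G where "G = (\<lambda>i r. integral {0..r} (\<lambda>s. ln s * f i s * s))"
  have "\<exists>V'. (\<forall>t>0. (U i has_real_derivative V' t) (at t)) \<and> continuous_on UNIV V' \<and>
          continuous_on {0..} (U i) \<and>
          (\<forall>r>0. ((\<lambda>r. r * V' r) has_real_derivative
             (r * laplacian (\<lambda>x::real^2. U i (norm x)) (r *\<^sub>R axis 1 1))) (at r))" for i
  proof -
    obtain V' where "\<And>t. t > 0 \<Longrightarrow> (U i has_real_derivative V' t) (at t)"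
      "continuous_on UNIV V'" "continuous_on {0..} (U i)"
      "\<And>r. r > 0 \<Longrightarrow> ((\<lambda>r. r * V' r) has_real_derivative
          (r * laplacian (\<lambda>x::real^2. U i (norm x)) (r *\<^sub>R axis 1 1))) (at r)"
      using radial_calc[OF reg[rule_format, of i]] by blast
    then show ?thesis by blast
  qed
  then obtain dU where dU: "\<And>i t. t > 0 \<Longrightarrow> (U i has_real_derivative dU i t) (at t)"
    and cdU: "\<And>i. continuous_on UNIV (dU i)" and cU: "\<And>i. continuous_on {0..} (U i)"
    and dW0: "\<And>i r. r > 0 \<Longrightarrow> ((\<lambda>r. r * dU i r) has_real_derivative
             (r * laplacian (\<lambda>x::real^2. U i (norm x)) (r *\<^sub>R axis 1 1))) (at r)"
    by metis
  have lap: "laplacian (\<lambda>x::real^2. U i (norm x)) (r *\<^sub>R axis 1 1) = - f i r" if "r > 0" for i r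
  proof -
    have "norm (r *\<^sub>R axis 1 1 :: real^2) = r" using that by simp
    then show ?thesis using eqn[rule_format, of i "r *\<^sub>R axis 1 1"] by (simp add: f_def)
  qed
  have dW: "((\<lambda>r. r * dU i r) has_real_derivative (- (r * f i r))) (at r)" if "r > 0" for i r
    using dW0[OF that, of i] lap[OF that, of i] by simp
  have cf: "continuous_on {0..} (f i)" for i
    unfolding f_def by (intro continuous_intros continuous_on_compose2[OF continuous_on_exp cU]) auto
  have f0: "f i s \<ge> 0" for i s
    unfolding f_def using nonneg by (intro sum_nonneg) auto
  have RI1: "r * dU i r = - M i r" if "r > 0" for i r
    unfolding M_def by (rule radial_integral(1)[OF dU cdU cU dW cf that])
  have RI2: "U i r = U i 0 - ln r * M i r + G i r" if "r > 0" for i r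
    unfolding M_def G_def by (rule radial_integral(2)[OF dU cdU cU dW cf that])

  have intf: "(\<lambda>x::real^2. f i (norm x)) integrable_on UNIV" for i
    unfolding f_def
  proof (intro integrable_sum)
    fix j
    show "(\<lambda>x::real^2. A $ i $ j * exp (U j (norm x))) integrable_on UNIV"
      using integrable_on_cmult_left[OF finite_mass[rule_format, of j], of "A $ i $ j"] by simp
  qed simp
  have cexp: "continuous_on {0..} (\<lambda>s. exp (U k s))" for k
    by (intro continuous_on_compose2[OF continuous_on_exp cU]) auto
  have ms_eq: "ms i = (1 / (2 * pi)) * integral UNIV (\<lambda>x::real^2. f i (norm x))" for i
    by (simp add: ms_def f_def)
  have Mlim: "(\<lambda>n. M i (real n)) \<longlonglongrightarrow> ms i" for i
  proof -
    have "(\<lambda>n. (1 / (2 * pi)) * (2 * pi * M i (real n))) \<longlonglongrightarrow> (1 / (2 * pi)) * integral UNIV (\<lambda>x::real^2. f i (norm x))"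
      unfolding M_def by (intro tendsto_mult_left polar_lim(1)[OF cf f0 intf])
    then show ?thesis by (simp add: ms_eq)
  qed
  have Mle: "M i R \<le> ms i" if "R \<ge> 0" for i R
  proof -
    have "2 * pi * M i R \<le> integral UNIV (\<lambda>x::real^2. f i (norm x))"
      unfolding M_def by (rule polar_lim(2)[OF cf f0 intf that])
    then show ?thesis by (simp add: ms_eq field_simps)
  qed
  have Mmono: "M i a \<le> M i b" if "0 \<le> a" "a \<le> b" for i a b
  proof -
    have "integral {0..a} (\<lambda>s. s * f i s) \<le> integral {0..b} (\<lambda>s. s * f i s)"
    proof (rule integral_subset_le)
      have "continuous_on {0..b} (\<lambda>s. s * f i s)"
        by (intro continuous_intros continuous_on_subset[OF cf[of i]]) auto
      then show "(\<lambda>s. s * f i s) integrable_on {0..b}" by (rule integrable_continuous_real)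
      then show "(\<lambda>s. s * f i s) integrable_on {0..a}" by (rule integrable_on_subinterval) (use that in auto)
    qed (use that f0 in auto)
    then show ?thesis by (simp add: M_def)
  qed
  have Ebound: "integral {0..R} (\<lambda>s. s * exp (U k s)) \<le> (1 / (2 * pi)) * integral UNIV (\<lambda>x::real^2. exp (U k (norm x)))"
    if "R \<ge> 0" for k R
  proof -
    have "2 * pi * integral {0..R} (\<lambda>s. s * exp (U k s)) \<le> integral UNIV (\<lambda>x::real^2. exp (U k (norm x)))"
      by (rule polar_lim(2)[OF cexp _ finite_mass[rule_format] that]) simp
    then show ?thesis by (simp add: field_simps)
  qed
  have dUeq: "dU i r = - M i r / r" if "r > 0" for i r
    using RI1[OF that, of i] that by (simp add: field_simps)
  have ms2: "ms k > 2" for k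
  proof (rule ccontr)
    assume "\<not> ms k > 2"
    then have mk: "ms k \<le> 2" by simp
    define c where "c = exp (U k 1)"
    have c: "c > 0" by (simp add: c_def)
    have lowU: "U k s \<ge> U k 1 - ms k * ln s" if s: "s \<ge> 1" for s
    proof -
      have "(\<lambda>r. U k r + ms k * ln r) 1 \<le> (\<lambda>r. U k r + ms k * ln r) s"
      proof (rule DERIV_nonneg_imp_nondecreasing[OF s])
        fix x :: real assume x: "1 \<le> x" "x \<le> s"
        then have x0: "x > 0" by simp
        have "((\<lambda>r. U k r + ms k * ln r) has_real_derivative (dU k x + ms k * (1 / x))) (at x)"
          using x0 by (auto intro!: derivative_eq_intros dU)
        moreover have "dU k x + ms k * (1 / x) \<ge> 0"
          using Mle[of x k] x0 by (simp add: dUeq[OF x0] field_simps)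
        ultimately show "\<exists>y. ((\<lambda>r. U k r + ms k * ln r) has_real_derivative y) (at x) \<and> 0 \<le> y" by blast
      qed
      then show ?thesis by simp
    qed
    have lowE: "s * exp (U k s) \<ge> c / s" if s: "s \<ge> 1" for s
    proof -
      have "exp (U k s) \<ge> exp (U k 1 - ms k * ln s)" using lowU[OF s] by simp
      also have "exp (U k 1 - ms k * ln s) = c * s powr (- ms k)"
        using s by (simp add: c_def exp_diff powr_def exp_minus field_simps)
      finally have "s * exp (U k s) \<ge> s * (c * s powr (- ms k))" using s by (simp add: mult_left_mono)
      also have "s * (c * s powr (- ms k)) = c * s powr (1 - ms k)"
        using s by (simp add: powr_diff powr_minus field_simps)
      also have "c * s powr (1 - ms k) \<ge> c * s powr (-1)"
        using s mk c by (intro mult_left_mono powr_mono) auto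
      also have "c * s powr (-1) = c / s" using s by (simp add: powr_minus divide_inverse)
      finally show ?thesis .
    qed
    define B where "B = (1 / (2 * pi)) * integral UNIV (\<lambda>x::real^2. exp (U k (norm x)))"
    obtain n :: nat where n': "max 1 (exp (B / c + 1)) \<le> real n" using real_arch_simple by blast
    have n1: "real n \<ge> 1" and n: "exp (B / c + 1) \<le> real n" using n' by auto
    have cs: "continuous_on {0..real n} (\<lambda>s. s * exp (U k s))"
      by (intro continuous_intros continuous_on_subset[OF cexp[of k]]) auto
    have "((\<lambda>s. c / s) has_integral (c * ln (real n) - c * ln 1)) {1..real n}"
    proof (rule fundamental_theorem_of_calculus[OF n1])
      fix x assume "x \<in> {1..real n}"
      then have "x > 0" by simp
      then have "((\<lambda>s. c * ln s) has_real_derivative c / x) (at x within {1..real n})"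
        by (auto intro!: derivative_eq_intros simp: field_simps)
      then show "((\<lambda>s. c * ln s) has_vector_derivative c / x) (at x within {1..real n})"
        by (simp add: has_real_derivative_iff_has_vector_derivative)
    qed
    then have i1: "((\<lambda>s. c / s) has_integral (c * ln (real n))) {1..real n}" by simp
    have "c * ln (real n) \<le> integral {1..real n} (\<lambda>s. s * exp (U k s))"
    proof (rule has_integral_le[OF i1])
      show "((\<lambda>s. s * exp (U k s)) has_integral integral {1..real n} (\<lambda>s. s * exp (U k s))) {1..real n}"
        by (rule integrable_integral, rule integrable_continuous_real, rule continuous_on_subset[OF cs]) auto
    qed (use lowE in auto)
    also have "\<dots> \<le> integral {0..real n} (\<lambda>s. s * exp (U k s))"
    proof (rule integral_subset_le)
      show "(\<lambda>s. s * exp (U k s)) integrable_on {0..real n}" by (rule integrable_continuous_real[OF cs])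
      then show "(\<lambda>s. s * exp (U k s)) integrable_on {1..real n}" by (rule integrable_on_subinterval) auto
    qed auto
    also have "\<dots> \<le> B" unfolding B_def by (rule Ebound) simp
    finally have up: "c * ln (real n) \<le> B" .
    have lnn: "ln (real n) \<ge> B / c + 1"
    proof -
      have "ln (exp (B / c + 1)) \<le> ln (real n)" using n n1 by (subst ln_le_cancel_iff) auto
      then show ?thesis by simp
    qed
    have "c * ln (real n) \<ge> c * (B / c + 1)" using c lnn by (simp add: mult_left_mono)
    moreover have "c * (B / c + 1) = B + c" using c by (simp add: field_simps)
    ultimately have "c * ln (real n) \<ge> B + c" by simp
    then show False using c up by linarith
  qed
  define m where "m = (MIN k. ms k)"
  have m_le: "m \<le> ms k" for k unfolding m_def by (rule Min_le) auto
  have m_in: "m \<in> range ms" unfolding m_def by (rule Min_in) auto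
  have m2: "m > 2" using m_in ms2 by auto
  define q where "q = (m + 2) / 2"
  have q2: "q > 2" using m2 by (simp add: q_def)
  have decay: "\<exists>R0 C. R0 \<ge> 1 \<and> C > 0 \<and> (\<forall>s\<ge>R0. exp (U k s) \<le> C * s powr (- q))" for k
  proof -
    have "ms k > q" using m_le[of k] m2 by (simp add: q_def)
    from order_tendstoD(1)[OF Mlim this] obtain N where N: "\<And>n. n \<ge> N \<Longrightarrow> q < M k (real n)"
      unfolding eventually_sequentially by blast
    define R0 where "R0 = max 1 (real N)"
    define C where "C = exp (U k R0 + q * ln R0)"
    have "\<forall>s\<ge>R0. exp (U k s) \<le> C * s powr (- q)"
    proof (intro allI impI)
      fix s assume s: "s \<ge> R0"
      have "(\<lambda>r. U k r + q * ln r) R0 \<ge> (\<lambda>r. U k r + q * ln r) s"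
      proof (rule DERIV_nonpos_imp_nonincreasing[OF s])
        fix x :: real assume x: "R0 \<le> x" "x \<le> s"
        then have x0: "x > 0" by (simp add: R0_def)
        have "((\<lambda>r. U k r + q * ln r) has_real_derivative (dU k x + q * (1 / x))) (at x)"
          using x0 by (auto intro!: derivative_eq_intros dU)
        moreover have "M k x \<ge> M k (real N)" using x by (intro Mmono) (auto simp: R0_def)
        then have "M k x > q" using N[of N] by simp
        then have "dU k x + q * (1 / x) \<le> 0"
          using x0 by (simp add: dUeq[OF x0] field_simps)
        ultimately show "\<exists>y. ((\<lambda>r. U k r + q * ln r) has_real_derivative y) (at x) \<and> y \<le> 0" by blast
      qed
      then have "U k s \<le> U k R0 + q * ln R0 - q * ln s" by simp
      then have "exp (U k s) \<le> exp (U k R0 + q * ln R0 - q * ln s)" by simp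
      also have "\<dots> = C * s powr (- q)"
        using s by (simp add: C_def exp_diff powr_def R0_def exp_minus field_simps)
      finally show "exp (U k s) \<le> C * s powr (- q)" .
    qed
    then show ?thesis by (intro exI[of _ R0] exI[of _ C]) (auto simp: R0_def C_def)
  qed
  then obtain R0 Cc where R0: "\<And>k. R0 k \<ge> 1" and Cc: "\<And>k. Cc k > 0"
    and decayk: "\<And>k s. s \<ge> R0 k \<Longrightarrow> exp (U k s) \<le> Cc k * s powr (- q)"
    by metis
  define R1 where "R1 = Max (range R0)"
  have R1ge: "R0 k \<le> R1" for k unfolding R1_def by (rule Max_ge) auto
  have R1: "R1 \<ge> 1" using R1ge[of undefined] R0[of undefined] by simp
  have fdecay: "f i s \<le> (\<Sum>j\<in>UNIV. A $ i $ j * Cc j) * s powr (- q)" if "s \<ge> R1" for i s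
  proof -
    have "f i s \<le> (\<Sum>j\<in>UNIV. A $ i $ j * (Cc j * s powr (- q)))"
      unfolding f_def
    proof (rule sum_mono)
      fix j
      show "A $ i $ j * exp (U j s) \<le> A $ i $ j * (Cc j * s powr (- q))"
        using nonneg decayk[of j s] R1ge[of j] that by (intro mult_left_mono) auto
    qed
    also have "\<dots> = (\<Sum>j\<in>UNIV. A $ i $ j * Cc j) * s powr (- q)"
      by (simp add: sum_distrib_right mult.assoc)
    finally show ?thesis .
  qed
  have ch: "continuous_on {0..} (\<lambda>s. ln s * f i s * s)" for i
  proof -
    have "continuous_on {0..} (\<lambda>s. (ln s * s) * f i s)"
      by (intro continuous_on_mult cont_xlnx cf)
    then show ?thesis by (simp add: mult_ac)
  qed
  have Glim: "(\<lambda>n. G i (real n)) \<longlonglongrightarrow> D i" for i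
  proof -
    define h where "h = (\<lambda>s. ln s * f i s * s)"
    define K where "K = (\<Sum>j\<in>UNIV. A $ i $ j * Cc j)"
    have K0: "K \<ge> 0" unfolding K_def
    proof (intro sum_nonneg)
      fix j show "0 \<le> A $ i $ j * Cc j" using nonneg Cc[of j] by simp
    qed
    define q' where "q' = (q - 2) / 2"
    have q': "q' > 0" using q2 by (simp add: q'_def)
    have hbig: "\<bar>h s\<bar> \<le> K / q' * s powr (-1 - q')" if s: "s \<ge> R1" for s
    proof -
      have s1: "s \<ge> 1" using s R1 by simp
      have lnpos: "ln s \<ge> 0" using s1 by simp
      have lnb: "ln s \<le> s powr q' / q'"
      proof -
        have "q' * ln s = ln (s powr q')" using s1 by (simp add: ln_powr)
        also have "\<dots> \<le> s powr q' - 1" using s1 by (intro ln_le_minus_one) simp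
        finally have "q' * ln s \<le> s powr q'" by simp
        then show ?thesis using q' by (simp add: field_simps)
      qed
      have h0: "h s \<ge> 0" unfolding h_def using lnpos f0 s1 by simp
      have "h s = ln s * (f i s * s)" by (simp add: h_def)
      also have "\<dots> \<le> (s powr q' / q') * (K * s powr (- q) * s)"
      proof (rule mult_mono[OF lnb])
        show "f i s * s \<le> K * s powr (- q) * s"
          using fdecay[OF s, of i] s1 by (simp add: K_def mult_right_mono)
      qed (use f0 s1 q' in auto)
      also have "\<dots> = K / q' * (s powr q' * s powr (- q) * s powr 1)" using s1 by simp
      also have "\<dots> = K / q' * s powr (-1 - q')"
      proof -
        have e: "q' + - q + 1 = -1 - q'" by (simp add: q'_def field_simps)
        have "s powr q' * s powr (- q) * s powr 1 = s powr (q' + - q + 1)" by (simp only: powr_add)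
        then show ?thesis by (simp only: e)
      qed
      finally show ?thesis using h0 by simp
    qed
    have "bounded (h ` {0..R1})"
      by (rule compact_imp_bounded, rule compact_continuous_image)
         (use ch[of i] in \<open>auto simp: h_def intro: continuous_on_subset\<close>)
    then obtain B where B: "\<And>s. s \<in> {0..R1} \<Longrightarrow> \<bar>h s\<bar> \<le> B"
      unfolding bounded_iff by (metis image_eqI real_norm_def)
    have B0: "B \<ge> 0" using B[of 0] R1 by auto
    define g where "g = (\<lambda>s. (if s \<in> {..R1} then B else 0) + (if s \<in> {R1..} then K / q' * s powr (-1 - q') else 0))"
    have gint: "g integrable_on {0<..}"
      unfolding g_def
    proof (rule integrable_add)
      have "(\<lambda>s. B) integrable_on {0..R1}" by (rule integrable_const_ivl)
      then have "(\<lambda>s. B) integrable_on {0<..R1}" by (simp add: integrable_on_def has_integral_Ioc_Icc)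
      moreover have "{..R1} \<inter> {0<..} = {0<..R1}" by auto
      ultimately show "(\<lambda>s. if s \<in> {..R1} then B else 0) integrable_on {0<..}"
        by (subst integrable_restrict_Int) simp
    next
      have "(\<lambda>s. s powr (-1 - q')) integrable_on {R1..}"
        using has_integral_powr_to_inf[of "-1 - q'" R1] q' R1 by (auto simp: integrable_on_def)
      then have "(\<lambda>s. K / q' * s powr (-1 - q')) integrable_on {R1..}"
        using integrable_on_cmult_left[of "\<lambda>s. s powr (-1 - q')" "{R1..}" "K / q'"] by simp
      moreover have "{R1..} \<inter> {0<..} = {R1..}" using R1 by auto
      ultimately show "(\<lambda>s. if s \<in> {R1..} then K / q' * s powr (-1 - q') else 0) integrable_on {0<..}"
        by (subst integrable_restrict_Int) simp
    qed
    define fn where "fn = (\<lambda>n::nat. \<lambda>s. if s \<in> {..real n} then h s else 0)"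
    have fnint: "fn n integrable_on {0<..}" for n
    proof -
      have "h integrable_on {0..real n}"
        by (rule integrable_continuous_real) (use ch[of i] in \<open>auto simp: h_def intro: continuous_on_subset\<close>)
      then have "h integrable_on {0<..real n}" by (simp add: integrable_on_def has_integral_Ioc_Icc)
      moreover have "{..real n} \<inter> {0<..} = {0<..real n}" by auto
      ultimately show ?thesis unfolding fn_def by (subst integrable_restrict_Int) simp
    qed
    have fnval: "integral {0<..} (fn n) = G i (real n)" for n
    proof -
      have "{..real n} \<inter> {0<..} = {0<..real n}" by auto
      then show ?thesis unfolding fn_def G_def h_def by (subst integral_restrict_Int) (simp add: integral_Ioc_Icc)
    qed
    have "(\<lambda>n. integral {0<..} (fn n)) \<longlonglongrightarrow> integral {0<..} h"
    proof (rule dominated_convergence(2)[OF fnint gint])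
      fix n and s :: real assume s: "s \<in> {0<..}"
      have g1: "0 \<le> (if s \<in> {..R1} then B else 0)" using B0 by simp
      have g2: "0 \<le> (if s \<in> {R1..} then K / q' * s powr (-1 - q') else 0)" using K0 q' by simp
      show "norm (fn n s) \<le> g s"
      proof (cases "s \<le> real n")
        case False then show ?thesis using g1 g2 by (simp add: fn_def g_def)
      next
        case True
        show ?thesis
        proof (cases "s \<le> R1")
          case True
          then have "\<bar>h s\<bar> \<le> B" using B s by auto
          then show ?thesis using True \<open>s \<le> real n\<close> g2 by (simp add: fn_def g_def)
        next
          case False
          then have "\<bar>h s\<bar> \<le> K / q' * s powr (-1 - q')" using hbig by simp
          then show ?thesis using False \<open>s \<le> real n\<close> g1 by (simp add: fn_def g_def)
        qed
      qed
    next
      fix s :: real assume s: "s \<in> {0<..}"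
      obtain N :: nat where N: "s \<le> real N" using real_arch_simple by blast
      have "eventually (\<lambda>n. fn n s = h s) sequentially"
        unfolding eventually_sequentially
      proof (intro exI allI impI)
        fix n assume "N \<le> n"
        then have "s \<le> real n" using N by linarith
        then show "fn n s = h s" by (simp add: fn_def)
      qed
      then show "(\<lambda>n. fn n s) \<longlonglongrightarrow> h s" by (rule tendsto_eventually)
    qed
    moreover have "integral {0<..} h = D i" by (simp add: D_def h_def f_def)
    ultimately show ?thesis by (simp add: fnval)
  qed
  define C where "C = (\<lambda>k. exp (D k - \<alpha> k))"
  define T where "T = (\<lambda>k r. U k r - U k 0 + ms k * ln r - D k)"
  have Cpos: "C k > 0" for k by (simp add: C_def)
  have Tform: "T k r = ln r * (ms k - M k r) - (D k - G k r)" if "r > 0" for k r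
    using RI2[OF that, of k] by (simp add: T_def algebra_simps)
  have sexpU: "s * exp (U k s) = C k * s powr (1 - ms k) * exp (T k s)" if s: "s > 0" for k s
  proof -
    have "C k * s powr (1 - ms k) * exp (T k s) = exp (D k + U k 0) * exp ((1 - ms k) * ln s) * exp (U k s - U k 0 + ms k * ln s - D k)"
      using s by (simp add: C_def \<alpha>_def T_def powr_def)
    also have "\<dots> = exp (ln s + U k s)" by (simp flip: exp_add) (simp add: algebra_simps)
    also have "\<dots> = s * exp (U k s)" using s by (simp add: exp_add)
    finally show ?thesis by simp
  qed
  define \<phi> where "\<phi> = (\<lambda>k r s. (ln s - ln r) * (s * f k s))"
  have cfr: "continuous_on {r..n} (f k)" if "r > 0" for k r n
    by (rule continuous_on_subset[OF cf]) (use that in auto)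
  have cpowr: "continuous_on {r..n} (\<lambda>s. (ln s - ln r) * s powr e)" if "r > 0" for r n e :: real
    using that by (intro continuous_intros) auto
  have \<phi>int: "\<phi> k r integrable_on {r..n}" if "r > 0" for k r n
    unfolding \<phi>_def using that cfr[OF that, of n k]
    by (intro integrable_continuous_real continuous_intros) auto
  have NIlim: "(\<lambda>n. integral {r..real n} (\<phi> k r)) \<longlonglongrightarrow> - T k r" if r: "r > 0" for k r
  proof -
    have lim: "(\<lambda>n. (G k (real n) - G k r) - ln r * (M k (real n) - M k r)) \<longlonglongrightarrow> (D k - G k r) - ln r * (ms k - M k r)"
      by (intro tendsto_intros Mlim Glim)
    obtain N :: nat where N: "r \<le> real N" using real_arch_simple by blast
    have ev: "eventually (\<lambda>n. (G k (real n) - G k r) - ln r * (M k (real n) - M k r) = integral {r..real n} (\<phi> k r)) sequentially"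
      unfolding eventually_sequentially
    proof (intro exI allI impI)
      fix n assume "N \<le> n"
      then have rn: "r \<le> real n" using N by linarith
      have c1: "continuous_on {0..real n} (\<lambda>s. s * f k s)"
        by (intro continuous_intros continuous_on_subset[OF cf[of k]]) auto
      have c2: "continuous_on {0..real n} (\<lambda>s. ln s * f k s * s)"
        by (rule continuous_on_subset[OF ch[of k]]) auto
      have i1: "(\<lambda>s. s * f k s) integrable_on {r..real n}"
        by (rule integrable_on_subinterval[OF integrable_continuous_real[OF c1]]) (use r in auto)
      have i2: "(\<lambda>s. ln s * f k s * s) integrable_on {r..real n}"
        by (rule integrable_on_subinterval[OF integrable_continuous_real[OF c2]]) (use r in auto)
      have M: "M k (real n) - M k r = integral {r..real n} (\<lambda>s. s * f k s)"
        using Henstock_Kurzweil_Integration.integral_combine[OF _ rn integrable_continuous_real[OF c1]] r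
        by (simp add: M_def)
      have G: "G k (real n) - G k r = integral {r..real n} (\<lambda>s. ln s * f k s * s)"
        using Henstock_Kurzweil_Integration.integral_combine[OF _ rn integrable_continuous_real[OF c2]] r
        by (simp add: G_def)
      have "integral {r..real n} (\<phi> k r) = integral {r..real n} (\<lambda>s. ln s * f k s * s - ln r * (s * f k s))"
        by (rule integral_cong) (simp add: \<phi>_def algebra_simps)
      also have "\<dots> = integral {r..real n} (\<lambda>s. ln s * f k s * s) - integral {r..real n} (\<lambda>s. ln r * (s * f k s))"
        by (rule Henstock_Kurzweil_Integration.integral_diff[OF i2]) (rule integrable_on_cmult_left[OF i1, of "ln r", simplified])
      also have "integral {r..real n} (\<lambda>s. ln r * (s * f k s)) = ln r * integral {r..real n} (\<lambda>s. s * f k s)"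
        by (rule integral_mult[OF i1, symmetric])
      finally show "(G k (real n) - G k r) - ln r * (M k (real n) - M k r) = integral {r..real n} (\<phi> k r)"
        by (simp only: M G)
    qed
    have "(D k - G k r) - ln r * (ms k - M k r) = - T k r" by (simp add: Tform[OF r])
    with Lim_transform_eventually[OF lim ev] show ?thesis by simp
  qed
  have Tneg: "T k r \<le> 0" if r: "r > 0" for k r
  proof -
    obtain N :: nat where N: "r \<le> real N" using real_arch_simple by blast
    have "0 \<le> - T k r"
    proof (rule LIMSEQ_le_const[OF NIlim[OF r]], intro exI allI impI)
      fix n assume "N \<le> n"
      then have rn: "r \<le> real n" using N by linarith
      show "0 \<le> integral {r..real n} (\<phi> k r)"
        by (rule integral_nonneg[OF \<phi>int[OF r]]) (use r f0 in \<open>auto simp: \<phi>_def\<close>)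
    qed
    then show ?thesis by simp
  qed
  have sexp_le: "s * exp (U j s) \<le> C j * s powr (1 - m)" if s: "s \<ge> 1" for j s
  proof -
    have "s * exp (U j s) = C j * s powr (1 - ms j) * exp (T j s)" using s by (intro sexpU) simp
    also have "\<dots> \<le> C j * s powr (1 - ms j) * 1"
      using Tneg[of s j] s Cpos[of j] by (intro mult_left_mono) auto
    also have "\<dots> \<le> C j * s powr (1 - m)"
      using s m_le[of j] Cpos[of j] by (simp add: powr_mono)
    finally show ?thesis .
  qed
  define K1 where "K1 = (\<lambda>k. (\<Sum>j\<in>UNIV. A $ k $ j * C j) / (m - 2)^2)"
  have K1pos: "K1 k \<ge> 0" for k
    unfolding K1_def using nonneg Cpos by (intro divide_nonneg_nonneg sum_nonneg mult_nonneg_nonneg) (auto intro: less_imp_le)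
  have Tbound: "- T k r \<le> K1 k * r powr (2 - m)" if r: "r \<ge> 1" for k r
  proof -
    define c where "c = (\<Sum>j\<in>UNIV. A $ k $ j * C j)"
    have c0: "c \<ge> 0" unfolding c_def using nonneg Cpos by (intro sum_nonneg mult_nonneg_nonneg) (auto intro: less_imp_le)
    have p: "m - 2 > 0" using m2 by simp
    obtain N :: nat where N: "r \<le> real N" using real_arch_simple by blast
    have r0: "r > 0" using r by simp
    have "- T k r \<le> c * (r powr (- (m - 2)) / (m - 2)^2)"
    proof (rule LIMSEQ_le_const2[OF NIlim[OF r0]], intro exI allI impI)
      fix n assume "N \<le> n"
      then have rn: "r \<le> real n" using N by linarith
      show "integral {r..real n} (\<phi> k r) \<le> c * (r powr (- (m - 2)) / (m - 2)^2)"
      proof (rule tail_bound(2)[OF p r0 rn c0 \<phi>int[OF r0]])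
        fix s assume s: "r \<le> s" "s \<le> real n"
        then have s1: "s \<ge> 1" using r by simp
        have L: "ln s - ln r \<ge> 0" using s r by simp
        show "0 \<le> \<phi> k r s \<and> \<phi> k r s \<le> c * ((ln s - ln r) * s powr (-1 - (m - 2)))"
        proof
          show "0 \<le> \<phi> k r s" unfolding \<phi>_def using L f0[of k s] s1 by simp
          have "s * f k s = (\<Sum>j\<in>UNIV. A $ k $ j * (s * exp (U j s)))"
            by (simp add: f_def sum_distrib_left mult_ac)
          also have "\<dots> \<le> (\<Sum>j\<in>UNIV. A $ k $ j * (C j * s powr (1 - m)))"
            using nonneg sexp_le[OF s1] by (intro sum_mono mult_left_mono) auto
          also have "\<dots> = c * s powr (1 - m)"
            by (simp add: c_def sum_distrib_right mult.assoc)
          also have "\<dots> = c * s powr (-1 - (m - 2))" by simp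
          finally have "s * f k s \<le> c * s powr (-1 - (m - 2))" .
          then have "\<phi> k r s \<le> (ln s - ln r) * (c * s powr (-1 - (m - 2)))"
            unfolding \<phi>_def using L by (rule mult_left_mono)
          then show "\<phi> k r s \<le> c * ((ln s - ln r) * s powr (-1 - (m - 2)))" by (simp add: mult_ac)
        qed
      qed
    qed
    also have "\<dots> = K1 k * r powr (2 - m)" by (simp add: K1_def c_def)
    finally show ?thesis .
  qed
  define Q where "Q = (\<lambda>i r. T i r + (\<Sum>j\<in>UNIV. A $ i $ j / (ms j - 2)^2 * C j * r powr (2 - ms j)))"
  define K2 where "K2 = (\<lambda>i. (\<Sum>j\<in>UNIV. A $ i $ j * C j * K1 j))"
  have p2: "2 * m - 4 > 0" using m2 by simp
  have Qbound: "0 \<le> Q i r \<and> Q i r \<le> K2 i * (r powr (- (2 * m - 4)) / (2 * m - 4)^2)" if r: "r \<ge> 1" for i r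
  proof -
    have r0: "r > 0" using r by simp
    define J where "J = (\<lambda>j n. integral {r..real n} (\<lambda>s. (ln s - ln r) * s powr (-1 - (ms j - 2))))"
    have Jlim: "J j \<longlonglongrightarrow> r powr (- (ms j - 2)) / (ms j - 2)^2" for j
      unfolding J_def by (rule log_pow_lim[OF _ r0]) (use ms2[of j] in simp)
    define Z where "Z = (\<lambda>n. (\<Sum>j\<in>UNIV. A $ i $ j * C j * J j n) - integral {r..real n} (\<phi> i r))"
    have "Z \<longlonglongrightarrow> (\<Sum>j\<in>UNIV. A $ i $ j * C j * (r powr (- (ms j - 2)) / (ms j - 2)^2)) - (- T i r)"
      unfolding Z_def by (intro tendsto_intros Jlim NIlim[OF r0])
    moreover have "(\<Sum>j\<in>UNIV. A $ i $ j * C j * (r powr (- (ms j - 2)) / (ms j - 2)^2)) - (- T i r) = Q i r"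
      by (simp add: Q_def algebra_simps)
    ultimately have Zlim: "Z \<longlonglongrightarrow> Q i r" by simp
    obtain N :: nat where N: "r \<le> real N" using real_arch_simple by blast
    define \<psi> where "\<psi> = (\<lambda>s. (\<Sum>j\<in>UNIV. A $ i $ j * C j * ((ln s - ln r) * s powr (-1 - (ms j - 2)))) - \<phi> i r s)"
    have Zb: "0 \<le> Z n \<and> Z n \<le> K2 i * (r powr (- (2 * m - 4)) / (2 * m - 4)^2)" if "N \<le> n" for n
    proof -
      have rn: "r \<le> real n" using N that by linarith
      have ipow: "(\<lambda>s. (ln s - ln r) * s powr e) integrable_on {r..real n}" for e
        by (rule integrable_continuous_real[OF cpowr[OF r0]])
      have isum: "(\<lambda>s. \<Sum>j\<in>UNIV. A $ i $ j * C j * ((ln s - ln r) * s powr (-1 - (ms j - 2))))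
                   integrable_on {r..real n}"
        by (intro integrable_sum) (auto intro: integrable_on_cmult_left[OF ipow, simplified])
      have Zeq: "Z n = integral {r..real n} \<psi>"
      proof -
        have "integral {r..real n} \<psi> = integral {r..real n} (\<lambda>s. \<Sum>j\<in>UNIV. A $ i $ j * C j * ((ln s - ln r) * s powr (-1 - (ms j - 2))))
                - integral {r..real n} (\<phi> i r)"
          unfolding \<psi>_def by (rule Henstock_Kurzweil_Integration.integral_diff[OF isum \<phi>int[OF r0]])
        also have "integral {r..real n} (\<lambda>s. \<Sum>j\<in>UNIV. A $ i $ j * C j * ((ln s - ln r) * s powr (-1 - (ms j - 2))))
             = (\<Sum>j\<in>UNIV. integral {r..real n} (\<lambda>s. A $ i $ j * C j * ((ln s - ln r) * s powr (-1 - (ms j - 2)))))"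
          by (rule Henstock_Kurzweil_Integration.integral_sum) (auto intro: integrable_on_cmult_left[OF ipow, simplified])
        also have "\<dots> = (\<Sum>j\<in>UNIV. A $ i $ j * C j * J j n)"
          unfolding J_def by (intro sum.cong refl integral_mult[OF ipow, symmetric])
        finally show ?thesis by (simp add: Z_def)
      qed
      have K20: "K2 i \<ge> 0" unfolding K2_def using nonneg Cpos K1pos
        by (intro sum_nonneg mult_nonneg_nonneg) (auto intro: less_imp_le)
      have \<psi>int: "\<psi> integrable_on {r..real n}" unfolding \<psi>_def by (intro integrable_diff isum \<phi>int[OF r0])
      have bnd: "0 \<le> \<psi> s \<and> \<psi> s \<le> K2 i * ((ln s - ln r) * s powr (-1 - (2 * m - 4)))"
        if s: "r \<le> s" "s \<le> real n" for s
      proof -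
        from s have s1: "s \<ge> 1" and s0: "s > 0" using r by auto
        define L where "L = ln s - ln r"
        have L: "L \<ge> 0" using s r0 by (simp add: L_def)
        have psi: "\<psi> s = (\<Sum>j\<in>UNIV. A $ i $ j * (L * (C j * s powr (1 - ms j) - s * exp (U j s))))"
          by (simp add: \<psi>_def \<phi>_def f_def L_def sum_distrib_left sum_subtractf[symmetric] algebra_simps)
        have trm: "0 \<le> C j * s powr (1 - ms j) - s * exp (U j s) \<and>
                    C j * s powr (1 - ms j) - s * exp (U j s) \<le> C j * K1 j * s powr (-1 - (2 * m - 4))" for j
        proof -
          have X: "C j * s powr (1 - ms j) - s * exp (U j s) = C j * s powr (1 - ms j) * (1 - exp (T j s))"
            using sexpU[OF s0, of j] by (simp add: algebra_simps)
          have a: "0 \<le> 1 - exp (T j s)" using Tneg[OF s0, of j] by simp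
          have b: "1 - exp (T j s) \<le> K1 j * s powr (2 - m)"
            using Tbound[OF s1, of j] exp_ge_add_one_self[of "T j s"] by linarith
          have cp: "0 \<le> C j * s powr (1 - ms j)" using Cpos[of j] by simp
          have "C j * s powr (1 - ms j) * (1 - exp (T j s)) \<le> C j * s powr (1 - ms j) * (K1 j * s powr (2 - m))"
            by (rule mult_left_mono[OF b cp])
          also have "\<dots> \<le> C j * s powr (1 - m) * (K1 j * s powr (2 - m))"
            using s1 m_le[of j] Cpos[of j] K1pos[of j] by (intro mult_right_mono mult_left_mono powr_mono) auto
          also have "\<dots> = C j * K1 j * (s powr (1 - m) * s powr (2 - m))" by (simp add: mult_ac)
          also have "s powr (1 - m) * s powr (2 - m) = s powr (-1 - (2 * m - 4))"
            by (simp add: powr_add[symmetric] algebra_simps)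
          finally show ?thesis using X a cp by simp
        qed
        have "0 \<le> \<psi> s" unfolding psi using nonneg trm L by (intro sum_nonneg mult_nonneg_nonneg) auto
        moreover have "\<psi> s \<le> (\<Sum>j\<in>UNIV. A $ i $ j * (L * (C j * K1 j * s powr (-1 - (2 * m - 4)))))"
          unfolding psi using nonneg trm L by (intro sum_mono mult_left_mono) auto
        moreover have "(\<Sum>j\<in>UNIV. A $ i $ j * (L * (C j * K1 j * s powr (-1 - (2 * m - 4)))))
                       = K2 i * (L * s powr (-1 - (2 * m - 4)))"
        proof -
          let ?P = "L * s powr (-1 - (2 * m - 4))"
          have "(\<Sum>j\<in>UNIV. A $ i $ j * (L * (C j * K1 j * s powr (-1 - (2 * m - 4)))))
               = (\<Sum>j\<in>UNIV. ?P * (A $ i $ j * C j * K1 j))"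
            by (rule sum.cong) (simp_all add: mult_ac)
          also have "\<dots> = ?P * K2 i" by (simp add: K2_def sum_distrib_left)
          finally show ?thesis by (simp only: mult.commute)
        qed
        ultimately show "0 \<le> \<psi> s \<and> \<psi> s \<le> K2 i * ((ln s - ln r) * s powr (-1 - (2 * m - 4)))"
          by (simp add: L_def)
      qed
      show ?thesis using tail_bound[OF p2 r0 rn K20 \<psi>int bnd] by (simp add: Zeq)
    qed
    have "0 \<le> Q i r" by (rule LIMSEQ_le_const[OF Zlim]) (use Zb in blast)
    moreover have "Q i r \<le> K2 i * (r powr (- (2 * m - 4)) / (2 * m - 4)^2)"
      by (rule LIMSEQ_le_const2[OF Zlim]) (use Zb in blast)
    ultimately show ?thesis by simp
  qed
  have mMin: "(MIN k. ms k) = m" by (simp add: m_def)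
  show ?thesis
  proof (intro exI[of _ "m - 2"] conjI allI)
    show "m - 2 > 0" using m2 by simp
    fix i
    have "eventually (\<lambda>r. norm (U i r - (- ms i * ln r + D i - \<alpha> i
        - (\<Sum>j\<in>UNIV. A $ i $ j / (ms j - 2)^2 * exp (D j - \<alpha> j) * r powr (2 - ms j))))
        \<le> (K2 i / (2 * m - 4)^2) * norm (r powr (2 - m - (m - 2)))) at_top"
      unfolding eventually_at_top_linorder
    proof (intro exI[of _ 1] allI impI)
      fix r :: real assume r: "r \<ge> 1"
      have eq: "U i r - (- ms i * ln r + D i - \<alpha> i
          - (\<Sum>j\<in>UNIV. A $ i $ j / (ms j - 2)^2 * exp (D j - \<alpha> j) * r powr (2 - ms j))) = Q i r"
        by (simp add: Q_def T_def C_def \<alpha>_def algebra_simps)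
      have pw: "r powr (2 - m - (m - 2)) = r powr (- (2 * m - 4))" by (simp add: algebra_simps)
      have "norm (Q i r) = Q i r" using Qbound[OF r, of i] by simp
      also have "\<dots> \<le> K2 i * (r powr (- (2 * m - 4)) / (2 * m - 4)^2)" using Qbound[OF r, of i] by simp
      also have "\<dots> = (K2 i / (2 * m - 4)^2) * norm (r powr (2 - m - (m - 2)))"
        using r by (simp add: pw)
      finally show "norm (U i r - (- ms i * ln r + D i - \<alpha> i
          - (\<Sum>j\<in>UNIV. A $ i $ j / (ms j - 2)^2 * exp (D j - \<alpha> j) * r powr (2 - ms j))))
          \<le> (K2 i / (2 * m - 4)^2) * norm (r powr (2 - m - (m - 2)))" by (simp only: eq)
    qed
    then show "(\<lambda>r. U i r - (- ms i * ln r + D i - \<alpha> i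
        - (\<Sum>j\<in>UNIV. A $ i $ j / (ms j - 2)^2 * exp (D j - \<alpha> j) * r powr (2 - ms j))))
     \<in> O[at_top](\<lambda>r. r powr (2 - (MIN k. ms k) - (m - 2)))"
      unfolding mMin by (rule bigoI)
  qed
qed
  
end
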